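(* Let $n\ge 2$, $1\le d\le n-1$, and consider a network of the type below on nodes $\{1,\dots,n\}$ in which node $i$ has degree $d$. Then $$\Delta_i\le \frac{\lambda_s}{\lambda}\,\frac{n}{d+1}\left(1+\sum_{d_2=0}^{d-1}\prod_{d_1=0}^{d_2}\frac{d-d_1}{d+1}\right),$$ with equality when the $d$ neighbours of $i$ have degree $1$ (i.e., the only links incident to them are their links to $i$).
   Context: Version-age model. A gossip network on a finite node set $\mathcal N$ is specified by source rates $\lambda_{0j}>0$ and gossip rates $\lambda_{ij}\ge 0$ ($i\neq j$; rate at which $i$ sends to $j$); $\lambda_s>0$ is the source's update rate. For nonempty $S\subseteq\mathcal N$ let $N(S)=\{i\in\mathcal N\setminus S:\ \sum_{j\in S}\lambda_{ij}>0\}$ and define $$\Delta_S=\frac{\lambda_s+\sum_{i\in N(S)}\big(\sum_{j\in S}\lambda_{ij}\big)\Delta_{S\cup\{i\}}}{\sum_{j\in S}\lambda_{0j}+\sum_{i\in N(S)}\sum_{j\in S}\lambda_{ij}}$$ (well defined by downward induction on $|S|$); $\Delta_i=\Delta_{\{i\}}$. Networks with uniform link rate: node set $\{1,\dots,n\}$, $\lambda_{0j}=\lambda/n$ for all $j$, and a set of links (unordered pairs of distinct nodes); for each link $\{a,b\}$, $\lambda_{ab}=\lambda_{ba}=\lambda/n$, and $\lambda_{ab}=0$ if $\{a,b\}$ is not a link. The degree of a node is the number of links incident to it. *)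

theory Defs
  imports Complex_Main
begin

text \<open>Version-age model on a finite node set N with source update rate ls,
  source rates l0 j and gossip rates l i j (rate at which i sends to j).\<close>

definition gossip_nbrs :: "'a set \<Rightarrow> ('a \<Rightarrow> 'a \<Rightarrow> real) \<Rightarrow> 'a set \<Rightarrow> 'a set" where
  "gossip_nbrs N l S = {i \<in> N - S. (\<Sum>j\<in>S. l i j) > 0}"

text \<open>Recursion with fuel k = card (N - S); the recursive calls on S \<union> {i}
  for i in the neighbourhood have fuel one less (downward induction on |S|).\<close>
fun delta_aux :: "nat \<Rightarrow> 'a set \<Rightarrow> real \<Rightarrow> ('a \<Rightarrow> real) \<Rightarrow> ('a \<Rightarrow> 'a \<Rightarrow> real) \<Rightarrow> 'a set \<Rightarrow> real" where
  "delta_aux 0 N ls l0 l S = ls / (\<Sum>j\<in>S. l0 j)"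
| "delta_aux (Suc k) N ls l0 l S =
     (ls + (\<Sum>i\<in>gossip_nbrs N l S. (\<Sum>j\<in>S. l i j) * delta_aux k N ls l0 l (insert i S)))
     / ((\<Sum>j\<in>S. l0 j) + (\<Sum>i\<in>gossip_nbrs N l S. \<Sum>j\<in>S. l i j))"

definition version_age :: "'a set \<Rightarrow> real \<Rightarrow> ('a \<Rightarrow> real) \<Rightarrow> ('a \<Rightarrow> 'a \<Rightarrow> real) \<Rightarrow> 'a set \<Rightarrow> real" where
  "version_age N ls l0 l S = delta_aux (card (N - S)) N ls l0 l S"

definition links_ok :: "nat \<Rightarrow> nat set set \<Rightarrow> bool" where
  "links_ok n E \<longleftrightarrow> (\<forall>e\<in>E. \<exists>a b. a \<noteq> b \<and> a \<in> {1..n} \<and> b \<in> {1..n} \<and> e = {a, b})"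

definition degree :: "nat set set \<Rightarrow> nat \<Rightarrow> nat" where
  "degree E i = card {e \<in> E. i \<in> e}"

definition unif_src :: "nat \<Rightarrow> real \<Rightarrow> nat \<Rightarrow> real" where
  "unif_src n lam j = lam / real n"

definition unif_gossip :: "nat \<Rightarrow> real \<Rightarrow> nat set set \<Rightarrow> nat \<Rightarrow> nat \<Rightarrow> real" where
  "unif_gossip n lam E a b = (if {a, b} \<in> E \<and> a \<noteq> b then lam / real n else 0)"

definition unif_age :: "nat \<Rightarrow> real \<Rightarrow> real \<Rightarrow> nat set set \<Rightarrow> nat \<Rightarrow> real" where
  "unif_age n lam ls E i = version_age {1..n} ls (unif_src n lam) (unif_gossip n lam E) {i}"

end

theory Submission imports Defs begin

fun TT :: "real \<Rightarrow> nat \<Rightarrow> nat \<Rightarrow> real" where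
  "TT a d 0 = a"
| "TT a d (Suc m) = a + (real m + 1) / (real d + 1) * TT a d m"

lemma TT_ge: "a > 0 \<Longrightarrow> TT a d m \<ge> a"
  by (induction m) (auto simp: add_increasing2)

lemma TT_mono: assumes "a > 0" shows "TT a d m \<le> TT a d (Suc m)"
proof (induction m)
  case 0 then show ?case using assms by simp
next
  case (Suc m)
  have "(real m + 1) / (real d + 1) * TT a d m \<le> (real (Suc m) + 1) / (real d + 1) * TT a d (Suc m)"
    apply (rule mult_mono) using Suc TT_ge[OF assms, of d m] assms by (auto simp: divide_right_mono)
  then show ?case by simp
qed

lemma TT_rec: "(real d + 1) * TT a d m = (real d + 1) * a + real m * TT a d (m - 1)"
  by (cases m) (auto simp: field_simps)

lemma TT_closed: "TT a d m = a * (1 + (\<Sum>j<m. \<Prod>t\<le>j. (real m - real t) / (real d + 1)))"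
proof (induction m)
  case 0 then show ?case by simp
next
  case (Suc m)
  have e: "\<And>j. (\<Prod>t\<le>Suc j. (real (Suc m) - real t) / (real d + 1))
      = (real m + 1) / (real d + 1) * (\<Prod>t\<le>j. (real m - real t) / (real d + 1))"
    by (subst prod.atMost_Suc_shift) simp
  have "(\<Sum>j<Suc m. \<Prod>t\<le>j. (real (Suc m) - real t) / (real d + 1))
     = (real m + 1) / (real d + 1) * (1 + (\<Sum>j<m. \<Prod>t\<le>j. (real m - real t) / (real d + 1)))"
    apply (subst sum.lessThan_Suc_shift)
    apply (simp only: e)
    by (simp add: sum_distrib_left algebra_simps)
  then show ?case using Suc by (simp add: algebra_simps)
qed


context
  fixes n d i :: nat and lam ls :: real and E :: "nat set set"
  assumes n2: "n \<ge> 2" and d1: "1 \<le> d" and dn: "d \<le> n - 1"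
    and lam: "lam > 0" and ls: "ls > 0"
    and lok: "links_ok n E"
    and iN: "i \<in> {1..n}" and deg: "degree E i = d"
begin

definition "Nb = {j. {i, j} \<in> E}"
definition "q = lam / real n"
definition "aa = ls * real n / lam / (real d + 1)"

lemma q_pos: "q > 0" using lam n2 by (simp add: q_def)
lemma aa_pos: "aa > 0" using lam n2 ls by (simp add: aa_def)
lemma ls_eq: "ls = q * (real d + 1) * aa"
proof -
  have "real d + 1 > 0" "real n > 0" using n2 by auto
  then have "aa * (real d + 1) = ls * real n / lam" unfolding aa_def by simp
  then have "q * (real d + 1) * aa = lam / real n * (ls * real n / lam)"
    unfolding q_def by (simp add: mult.commute mult.left_commute)
  then show ?thesis using lam n2 by simp
qed

lemma edge: "e \<in> E \<Longrightarrow> \<exists>a b. a \<noteq> b \<and> a \<in> {1..n} \<and> b \<in> {1..n} \<and> e = {a, b}"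
  using lok unfolding links_ok_def by blast

lemma Nb_N: "x \<in> Nb \<Longrightarrow> x \<in> {1..n} \<and> x \<noteq> i"
proof -
  assume "x \<in> Nb"
  then have "{i, x} \<in> E" by (simp add: Nb_def)
  from edge[OF this] obtain a b where "a \<noteq> b" "a \<in> {1..n}" "b \<in> {1..n}" "{i, x} = {a, b}" by blast
  then show ?thesis by (auto simp: doubleton_eq_iff)
qed

lemma finNb: "finite Nb"
  using Nb_N by (meson finite_atLeastAtMost finite_subset subsetI)

lemma iNb: "i \<notin> Nb" using Nb_N by blast

lemma card_Nb: "card Nb = d"
proof -
  have "bij_betw (\<lambda>j. {i, j}) Nb {e \<in> E. i \<in> e}"
  proof (rule bij_betwI')
    fix x y assume "x \<in> Nb" "y \<in> Nb"
    then show "({i, x} = {i, y}) = (x = y)" using Nb_N by (auto simp: doubleton_eq_iff)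
  next
    fix x assume "x \<in> Nb" then show "{i, x} \<in> {e \<in> E. i \<in> e}" by (simp add: Nb_def)
  next
    fix e assume "e \<in> {e \<in> E. i \<in> e}"
    then have e: "e \<in> E" "i \<in> e" by auto
    from edge[OF e(1)] obtain a b where "e = {a, b}" by blast
    with e show "\<exists>x\<in>Nb. e = {i, x}" unfolding Nb_def by (auto simp: insert_commute)
  qed
  then show ?thesis using deg unfolding degree_def by (simp add: bij_betw_same_card)
qed

abbreviation "NN \<equiv> {1..n}"
abbreviation "L0 \<equiv> unif_src n lam"
abbreviation "LL \<equiv> unif_gossip n lam E"

lemma sum_l0: "(\<Sum>j\<in>S. L0 j) = real (card S) * q"
  by (simp add: unif_src_def q_def)

lemma LL_nonneg: "LL x s \<ge> 0"
  using lam by (simp add: unif_gossip_def)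

lemma w_nonneg: "(\<Sum>j\<in>S. LL x j) \<ge> 0"
  by (simp add: LL_nonneg sum_nonneg)

lemma w_Nb: assumes "finite S" "i \<in> S" "x \<in> Nb" shows "(\<Sum>j\<in>S. LL x j) \<ge> q"
proof -
  have "LL x i = q" using assms(3) Nb_N[OF assms(3)]
    by (simp add: unif_gossip_def q_def Nb_def insert_commute)
  moreover have "LL x i \<le> (\<Sum>j\<in>S. LL x j)"
    by (rule member_le_sum) (use assms LL_nonneg in auto)
  ultimately show ?thesis by simp
qed

lemma card_S: assumes "finite S" "i \<in> S" shows "card S \<ge> card (S \<inter> Nb) + 1"
proof -
  have "insert i (S \<inter> Nb) \<subseteq> S" using assms by auto
  then have "card (insert i (S \<inter> Nb)) \<le> card S" using assms by (intro card_mono) auto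
  moreover have "card (insert i (S \<inter> Nb)) = card (S \<inter> Nb) + 1"
    using iNb assms(1) by simp
  ultimately show ?thesis by simp
qed

lemma k_le: "card (S \<inter> Nb) \<le> d"
  using card_Nb finNb by (metis card_mono inf_le2)

lemma bound:
  "card (NN - S) = f \<Longrightarrow> i \<in> S \<Longrightarrow> S \<subseteq> NN \<Longrightarrow>
   delta_aux f NN ls L0 LL S \<le> TT aa d (d - card (S \<inter> Nb))"
proof (induction f arbitrary: S)
  case 0
  then have S: "S = NN" by (metis Diff_eq_empty_iff card_0_eq finite_Diff finite_atLeastAtMost subset_antisym)
  have "delta_aux 0 NN ls L0 LL S = ls / lam"
    using S n2 lam by (simp add: sum_l0 q_def)
  also have "\<dots> \<le> aa"
  proof -
    have dn': "real d + 1 \<le> real n" using dn n2 by linarith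
    have "ls / lam = ls / lam * 1" by simp
    also have "\<dots> \<le> ls / lam * (real n / (real d + 1))"
      using dn' ls lam by (intro mult_left_mono) auto
    finally show ?thesis unfolding aa_def by simp
  qed
  also have "\<dots> \<le> TT aa d (d - card (S \<inter> Nb))" using TT_ge aa_pos by blast
  finally show ?case .
next
  case (Suc f)
  have finS: "finite S" using Suc.prems(3) finite_subset by blast
  define G where "G = gossip_nbrs NN LL S"
  define w where "w x = (\<Sum>j\<in>S. LL x j)" for x
  define k where "k = card (S \<inter> Nb)"
  define Dk where "Dk = TT aa d (d - k)"
  define Dk1 where "Dk1 = TT aa d (d - k - 1)"
  define Dx where "Dx x = delta_aux f NN ls L0 LL (insert x S)" for x
  have kd: "k \<le> d" using k_le k_def by simp
  have cS: "real (card S) \<ge> real k + 1" using card_S[OF finS Suc.prems(2)] k_def by simp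
  have finG: "finite G" unfolding G_def gossip_nbrs_def by simp
  have DkDk1: "Dk1 \<le> Dk"
  proof (cases "d - k")
    case 0 then show ?thesis unfolding Dk_def Dk1_def by simp
  next
    case (Suc m)
    then have "d - k - 1 = m" by simp
    then show ?thesis unfolding Dk_def Dk1_def using TT_mono[OF aa_pos, of d m] Suc by simp
  qed
  have Dk0: "Dk \<ge> 0" using TT_ge[OF aa_pos, of d "d - k"] aa_pos unfolding Dk_def by linarith
  have rec: "(real d + 1) * Dk = (real d + 1) * aa + real (d - k) * Dk1"
    unfolding Dk_def Dk1_def by (rule TT_rec)
  have IH: "Dx x \<le> (if x \<in> Nb then Dk1 else Dk)" if "x \<in> G" for x
  proof -
    have x: "x \<in> NN" "x \<notin> S" using that unfolding G_def gossip_nbrs_def by auto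
    have "card (NN - insert x S) = f"
      proof -
      have "NN - insert x S = (NN - S) - {x}" by blast
      then show ?thesis using Suc.prems(1) x by (simp add: card_Diff_singleton)
    qed
    then have "Dx x \<le> TT aa d (d - card (insert x S \<inter> Nb))"
      unfolding Dx_def using Suc.IH Suc.prems x by auto
    moreover have "card (insert x S \<inter> Nb) = (if x \<in> Nb then k + 1 else k)"
      using x finS unfolding k_def by (auto simp: Int_insert_left)
    ultimately show ?thesis unfolding Dk_def Dk1_def by (auto simp: diff_diff_left)
  qed
  have GNb: "G \<inter> Nb = Nb - S"
  proof
    show "G \<inter> Nb \<subseteq> Nb - S" unfolding G_def gossip_nbrs_def by auto
  next
    show "Nb - S \<subseteq> G \<inter> Nb"
    proof
      fix x assume x: "x \<in> Nb - S"
      have "w x \<ge> q" unfolding w_def using w_Nb[OF finS Suc.prems(2)] x by auto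
      then show "x \<in> G \<inter> Nb" unfolding G_def gossip_nbrs_def w_def using x Nb_N q_pos by auto
    qed
  qed
  define W1 where "W1 = (\<Sum>x\<in>G. if x \<in> Nb then w x else 0)"
  have W1eq: "W1 = (\<Sum>x\<in>Nb - S. w x)"
    unfolding W1_def using finG GNb by (metis sum.inter_restrict)
  have "(\<Sum>x\<in>Nb - S. q) \<le> (\<Sum>x\<in>Nb - S. w x)"
    by (rule sum_mono) (use w_Nb[OF finS Suc.prems(2)] w_def in auto)
  moreover have "card (Nb - S) = d - k"
    using card_Nb finNb k_def by (metis Int_commute card_Diff_subset_Int finite_Int)
  ultimately have W1ge: "W1 \<ge> real (d - k) * q" using W1eq by simp
  have S1: "(\<Sum>x\<in>G. w x * Dx x) \<le> (\<Sum>x\<in>G. w x * Dk - (if x \<in> Nb then w x else 0) * (Dk - Dk1))"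
  proof (rule sum_mono)
    fix x assume "x \<in> G"
    then have "w x * Dx x \<le> w x * (if x \<in> Nb then Dk1 else Dk)"
      using IH w_nonneg w_def by (simp add: mult_left_mono)
    then show "w x * Dx x \<le> w x * Dk - (if x \<in> Nb then w x else 0) * (Dk - Dk1)"
      by (auto simp: algebra_simps)
  qed
  have S1': "(\<Sum>x\<in>G. w x * Dk - (if x \<in> Nb then w x else 0) * (Dk - Dk1))
      = Dk * (\<Sum>x\<in>G. w x) - W1 * (Dk - Dk1)"
    unfolding W1_def by (simp add: sum_subtractf sum_distrib_left sum_distrib_right mult.commute)
  have key: "ls \<le> Dk * (real (card S) * q) + W1 * (Dk - Dk1)"
  proof -
    have "W1 * (Dk - Dk1) \<ge> real (d - k) * q * (Dk - Dk1)"
      using W1ge DkDk1 by (simp add: mult_right_mono)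
    moreover have "Dk * (real (card S) * q) \<ge> Dk * ((real k + 1) * q)"
      using cS Dk0 q_pos by (simp add: mult_left_mono)
    moreover have "Dk * ((real k + 1) * q) + real (d - k) * q * (Dk - Dk1) = q * (real d + 1) * aa"
    proof -
      have rdk: "real (d - k) = real d - real k" using kd by simp
      have h1: "(real k + 1) * Dk + real (d - k) * (Dk - Dk1) = (real d + 1) * Dk - real (d - k) * Dk1"
        unfolding rdk by (simp add: algebra_simps)
      have h2: "(real k + 1) * Dk + real (d - k) * (Dk - Dk1) = (real d + 1) * aa"
        using h1 rec by linarith
      have "Dk * ((real k + 1) * q) + real (d - k) * q * (Dk - Dk1)
          = q * ((real k + 1) * Dk + real (d - k) * (Dk - Dk1))" by (simp add: algebra_simps)
      also have "\<dots> = q * (real d + 1) * aa" using h2 by simp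
      finally show ?thesis .
    qed
    ultimately show ?thesis using ls_eq by linarith
  qed
  have den: "real (card S) * q + (\<Sum>x\<in>G. w x) > 0"
  proof -
    have "real (card S) * q > 0" using cS q_pos by simp
    moreover have "(\<Sum>x\<in>G. w x) \<ge> 0" using w_nonneg w_def by (simp add: sum_nonneg)
    ultimately show ?thesis by linarith
  qed
  have "delta_aux (Suc f) NN ls L0 LL S
      = (ls + (\<Sum>x\<in>G. w x * Dx x)) / (real (card S) * q + (\<Sum>x\<in>G. w x))"
    unfolding G_def w_def Dx_def by (simp only: delta_aux.simps sum_l0)
  also have "\<dots> \<le> Dk"
    using den S1 S1' key by (simp add: divide_le_eq algebra_simps)
  finally show ?case unfolding Dk_def k_def .
qed

lemma exact:
  assumes leaf: "\<And>j e. j \<in> Nb \<Longrightarrow> e \<in> E \<Longrightarrow> j \<in> e \<Longrightarrow> e = {i, j}"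
  shows "card (NN - S) = f \<Longrightarrow> i \<in> S \<Longrightarrow> S \<subseteq> insert i Nb \<Longrightarrow>
   delta_aux f NN ls L0 LL S = TT aa d (d - card (S \<inter> Nb))"
proof (induction f arbitrary: S)
  case 0
  have NbN: "Nb \<subseteq> NN" using Nb_N by blast
  have SN: "S \<subseteq> NN" using 0 NbN iN by blast
  then have S: "S = NN" using 0 by (metis Diff_eq_empty_iff card_0_eq finite_Diff finite_atLeastAtMost subset_antisym)
  then have NNeq: "NN = insert i Nb" using 0 NbN iN by blast
  then have "n = d + 1" using card_Nb finNb iNb by (metis card_atLeastAtMost card_insert_disjoint diff_Suc_1 Suc_eq_plus1 add.commute)
  moreover have "S \<inter> Nb = Nb" using S NbN by blast
  ultimately have k: "d - card (S \<inter> Nb) = 0" using card_Nb by simp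
  have "delta_aux 0 NN ls L0 LL S = ls / lam"
    using S n2 lam by (simp add: sum_l0 q_def)
  also have "\<dots> = aa"
  proof -
    have "real n = real d + 1" using \<open>n = d + 1\<close> by simp
    moreover have "real d + 1 > 0" by simp
    ultimately show ?thesis unfolding aa_def using lam by simp
  qed
  finally show ?case using k by simp
next
  case (Suc f)
  have NbN: "Nb \<subseteq> NN" using Nb_N by blast
  have finS: "finite S" using Suc.prems(3) finNb finite_subset by blast
  define G where "G = gossip_nbrs NN LL S"
  define w where "w x = (\<Sum>j\<in>S. LL x j)" for x
  define k where "k = card (S \<inter> Nb)"
  define Dk where "Dk = TT aa d (d - k)"
  define Dk1 where "Dk1 = TT aa d (d - k - 1)"
  have kd: "k \<le> d" using k_le k_def by simp
  have Seq: "S = insert i (S \<inter> Nb)" using Suc.prems by blast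
  have cS: "card S = k + 1" using finS iNb k_def by (subst Seq) simp
  have rec: "(real d + 1) * Dk = (real d + 1) * aa + real (d - k) * Dk1"
    unfolding Dk_def Dk1_def by (simp add: TT_rec diff_diff_left)
  have wNb: "w x = q" if x: "x \<in> Nb - S" for x
  proof -
    have "LL x s = (if s = i then q else 0)" if s: "s \<in> S" for s
    proof (cases "s = i")
      case True then show ?thesis using x Nb_N[of x]
        by (simp add: unif_gossip_def q_def Nb_def insert_commute)
    next
      case False
      then have sNb: "s \<in> Nb" using s Suc.prems by blast
      have "\<not> ({x, s} \<in> E \<and> x \<noteq> s)"
      proof
        assume h: "{x, s} \<in> E \<and> x \<noteq> s"
        then have "{x, s} = {i, s}" using leaf[OF sNb] by blast
        then have "x = i" using h by (auto simp: doubleton_eq_iff)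
        then show False using x iNb by blast
      qed
      then have "LL x s = 0" unfolding unif_gossip_def by (rule if_not_P)
      then show ?thesis using False by simp
    qed
    then have "w x = (\<Sum>s\<in>S. if s = i then q else 0)" unfolding w_def by (intro sum.cong) auto
    also have "\<dots> = q" using finS Suc.prems(2) by simp
    finally show ?thesis .
  qed
  have wout: "w x = 0" if x: "x \<in> NN - S" "x \<notin> Nb" for x
  proof -
    have "LL x s = 0" if s: "s \<in> S" for s
    proof -
      have "\<not> ({x, s} \<in> E \<and> x \<noteq> s)"
      proof
        assume h: "{x, s} \<in> E \<and> x \<noteq> s"
        show False
        proof (cases "s = i")
          case True then show False using h x unfolding Nb_def by (simp add: insert_commute)
        next
          case False
          then have sNb: "s \<in> Nb" using s Suc.prems by blast
          then have "{x, s} = {i, s}" using leaf[OF sNb] h by blast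
          then have "x = i" using h by (auto simp: doubleton_eq_iff)
          then show False using x Suc.prems by blast
        qed
      qed
      then show ?thesis unfolding unif_gossip_def by (rule if_not_P)
    qed
    then show ?thesis unfolding w_def by simp
  qed
  have GE: "G = Nb - S"
  proof
    show "G \<subseteq> Nb - S"
    proof
      fix x assume "x \<in> G"
      then have "x \<in> NN - S" "w x > 0" unfolding G_def gossip_nbrs_def w_def by auto
      then show "x \<in> Nb - S" using wout by force
    qed
  next
    show "Nb - S \<subseteq> G"
    proof
      fix x assume x: "x \<in> Nb - S"
      then show "x \<in> G" using wNb[OF x] q_pos NbN unfolding G_def gossip_nbrs_def w_def by auto
    qed
  qed
  have IH: "delta_aux f NN ls L0 LL (insert x S) = Dk1" if x: "x \<in> Nb - S" for x
  proof -
    have xN: "x \<in> NN - S" using x NbN by blast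
    have "NN - insert x S = (NN - S) - {x}" by blast
    then have "card (NN - insert x S) = f"
      using Suc.prems(1) xN by (simp add: card_Diff_singleton)
    moreover have "insert x S \<subseteq> insert i Nb" using x Suc.prems by blast
    ultimately have "delta_aux f NN ls L0 LL (insert x S) = TT aa d (d - card (insert x S \<inter> Nb))"
      using Suc.IH Suc.prems by auto
    moreover have "card (insert x S \<inter> Nb) = k + 1"
      using x finS unfolding k_def by (auto simp: Int_insert_left)
    ultimately show ?thesis unfolding Dk1_def by (simp add: diff_diff_left)
  qed
  have cNb: "card (Nb - S) = d - k"
    using card_Nb finNb k_def by (metis Int_commute card_Diff_subset_Int finite_Int)
  have num: "(\<Sum>x\<in>G. w x * delta_aux f NN ls L0 LL (insert x S)) = real (d - k) * q * Dk1"
    unfolding GE using wNb IH cNb by simp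
  have dsum: "(\<Sum>x\<in>G. w x) = real (d - k) * q"
    unfolding GE using wNb cNb by simp
  have "delta_aux (Suc f) NN ls L0 LL S
      = (ls + (\<Sum>x\<in>G. w x * delta_aux f NN ls L0 LL (insert x S))) / (real (card S) * q + (\<Sum>x\<in>G. w x))"
    unfolding G_def w_def by (simp only: delta_aux.simps sum_l0)
  also have "\<dots> = (ls + real (d - k) * q * Dk1) / (real (card S) * q + real (d - k) * q)"
    by (simp only: num dsum)
  also have "\<dots> = (q * ((real d + 1) * aa + real (d - k) * Dk1)) / (q * (real d + 1))"
    using cS kd ls_eq by (simp add: algebra_simps of_nat_diff)
  also have "\<dots> = Dk" using rec q_pos by (simp add: rec[symmetric])
  finally show ?case unfolding Dk_def k_def .
qed

lemma final:
  "unif_age n lam ls E i \<le> ls / lam * (real n / (real d + 1)) *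
           (1 + (\<Sum>d2 = 0..d - 1. \<Prod>d1 = 0..d2. (real d - real d1) / (real d + 1))) \<and>
   ((\<forall>j. {i, j} \<in> E \<longrightarrow> degree E j = 1) \<longrightarrow> unif_age n lam ls E i = ls / lam * (real n / (real d + 1)) *
           (1 + (\<Sum>d2 = 0..d - 1. \<Prod>d1 = 0..d2. (real d - real d1) / (real d + 1))))"
proof -
  have r1: "{0..d - 1} = {..<d}" using d1 by auto
  have TTd: "TT aa d d = ls / lam * (real n / (real d + 1)) *
           (1 + (\<Sum>d2 = 0..d - 1. \<Prod>d1 = 0..d2. (real d - real d1) / (real d + 1)))"
    unfolding TT_closed r1 by (simp add: aa_def atLeast0AtMost)
  have ua: "unif_age n lam ls E i = delta_aux (card (NN - {i})) NN ls L0 LL {i}"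
    unfolding unif_age_def version_age_def by simp
  have k0: "d - card ({i} \<inter> Nb) = d" using iNb by simp
  have A: "unif_age n lam ls E i \<le> TT aa d d"
    using bound[of "{i}" "card (NN - {i})"] iN ua k0 by simp
  have B: "unif_age n lam ls E i = TT aa d d" if h: "\<forall>j. {i, j} \<in> E \<longrightarrow> degree E j = 1"
  proof -
    have leaf: "e = {i, j}" if j: "j \<in> Nb" and e: "e \<in> E" "j \<in> e" for j e
    proof -
      have ij: "{i, j} \<in> E" using j by (simp add: Nb_def)
      then have "card {e \<in> E. j \<in> e} = 1" using h unfolding degree_def by blast
      then obtain x where x: "{e \<in> E. j \<in> e} = {x}" by (rule card_1_singletonE)
      have "{i, j} \<in> {e \<in> E. j \<in> e}" "e \<in> {e \<in> E. j \<in> e}" using ij e by auto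
      then show ?thesis using x by auto
    qed
    show ?thesis
      using exact[OF leaf, of "{i}" "card (NN - {i})"] iN ua k0 by simp
  qed
  show ?thesis using A B TTd by simp
qed

end

theorem mainTheorem9:
  fixes n d i :: nat and lam ls :: real and E :: "nat set set"
  assumes "n \<ge> 2" and "1 \<le> d" and "d \<le> n - 1"
    and "lam > 0" and "ls > 0"
    and "links_ok n E"
    and "i \<in> {1..n}" and "degree E i = d"
  defines "B \<equiv> ls / lam * (real n / (real d + 1)) *
           (1 + (\<Sum>d2 = 0..d - 1. \<Prod>d1 = 0..d2. (real d - real d1) / (real d + 1)))"
  shows "unif_age n lam ls E i \<le> B \<and>
         ((\<forall>j. {i, j} \<in> E \<longrightarrow> degree E j = 1) \<longrightarrow> unif_age n lam ls E i = B)"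
  using final[OF assms(1-8)] unfolding B_def .

end
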